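(* For every $f\in L^{\infty}(\mathbb{R}_+)$ and every $\omega\in\Omega^*$, $\chi_\omega(f)=\int_0^{\infty}f_\omega(-t)e^{-t}\,dt$.
   Context: $L^{\infty}(\mathbb{R}_+)$: real-valued essentially bounded measurable functions on $[0,\infty)$. Let $\beta\mathbb{N}_0$ be the Stone–Čech compactification of $\mathbb{N}_0$ (points = ultrafilters), $\tau$ the continuous extension of $n\mapsto n+1$, $\Omega=(\beta\mathbb{N}_0\times[0,1])/\sim$ with $(\tau\eta,0)\sim(\eta,1)$, containing $\mathbb{R}_+$ via $(n,t)\mapsto n+t$, and $\Omega^*=\Omega\setminus\mathbb{R}_+$; on $\Omega^*$ the flow $\tau^s(\eta,t)=(\tau^{[t+s]}\eta,t+s-[t+s])$, $s\in\mathbb{R}$. Each $\omega=(\eta,t)$ is identified with the ultrafilter $\{A+t:A\in\eta\}$ on $\mathbb{R}_+$. For $f\in L^{\infty}(\mathbb{R}_+)$ and $s\ge0$ put $f_s(x)=f(x+s)$; for $\omega\in\Omega^*$, $f_\omega=\omega\text{-}\lim_sf_s$, the limit along $\omega$ in the weak* topology of $L^{\infty}(\mathbb{R}_+)=L^1(\mathbb{R}_+)^*$, extended to $\mathbb{R}$ by $f_\omega(x)=f_{\tau^{-N}\omega}(N+x)$ for $x\in[-N,0]$, $N>0$. Finally $\chi_\omega(f)=\omega\text{-}\lim_xe^{-x}\int_0^xf(t)e^t\,dt$. *)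

theory Defs
  imports "HOL-Analysis.Analysis"
begin

text \<open>A point of beta N_0 is an ultrafilter on nat (represented as a filter).\<close>
definition is_ultrafilter :: "'a filter \<Rightarrow> bool" where
  "is_ultrafilter F \<longleftrightarrow> F \<noteq> bot \<and> (\<forall>P. eventually P F \<or> eventually (\<lambda>x. \<not> P x) F)"

text \<open>Free (non-principal) ultrafilters on N_0 are exactly those containing all cofinite
  sets, i.e. those finer than the cofinite filter sequentially.  A point
  omega = (eta, t) of Omega lies in Omega* = Omega minus R_+ iff eta is free; we use the
  canonical representative t in [0,1) of the identification (tau eta, 0) ~ (eta, 1).\<close>
definition Omega_star :: "(nat filter \<times> real) set" where
  "Omega_star = {(\<eta>, t). is_ultrafilter \<eta> \<and> \<eta> \<le> sequentially \<and> 0 \<le> t \<and> t < 1}"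

text \<open>The ultrafilter on R_+ identified with omega = (eta,t): the sets A + t, A in eta.\<close>
definition omega_filter :: "nat filter \<times> real \<Rightarrow> real filter" where
  "omega_filter \<omega> = filtermap (\<lambda>n. real n + snd \<omega>) (fst \<omega>)"

text \<open>The flow tau^(-N) for integer N on Omega*: (eta,t) goes to (tau^(-N) eta, t); on free
  ultrafilters tau^N = filtermap (%n. n+N) is invertible with inverse filtermap (%n. n-N).\<close>
definition tau_back :: "nat \<Rightarrow> nat filter \<times> real \<Rightarrow> nat filter \<times> real" where
  "tau_back N \<omega> = (filtermap (\<lambda>n. n - N) (fst \<omega>), snd \<omega>)"

definition Linf_Rplus :: "(real \<Rightarrow> real) set" where
  "Linf_Rplus = {f. set_borel_measurable lebesgue {0..} f \<and>
                    (\<exists>C. AE x in lebesgue. x \<in> {0..} \<longrightarrow> \<bar>f x\<bar> \<le> C)}"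

definition L1_Rplus :: "(real \<Rightarrow> real) set" where
  "L1_Rplus = {h. set_integrable lebesgue {0..} h}"

definition weak_star_lim :: "(real \<Rightarrow> real) \<Rightarrow> nat filter \<times> real \<Rightarrow> (real \<Rightarrow> real) \<Rightarrow> bool" where
  "weak_star_lim f \<omega> g \<longleftrightarrow> g \<in> Linf_Rplus \<and>
     (\<forall>h \<in> L1_Rplus.
        ((\<lambda>s. LINT x:{0..}|lebesgue. f (x + s) * h x) \<longlongrightarrow>
           (LINT x:{0..}|lebesgue. g x * h x)) (omega_filter \<omega>))"

definition f_omega :: "(real \<Rightarrow> real) \<Rightarrow> nat filter \<times> real \<Rightarrow> real \<Rightarrow> real" where
  "f_omega f \<omega> = (SOME g. weak_star_lim f \<omega> g)"

definition f_omega_ext :: "(real \<Rightarrow> real) \<Rightarrow> nat filter \<times> real \<Rightarrow> real \<Rightarrow> real" where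
  "f_omega_ext f \<omega> x =
     (if 0 \<le> x then f_omega f \<omega> x
      else (let N = nat \<lceil>- x\<rceil> in f_omega f (tau_back N \<omega>) (real N + x)))"

definition chi :: "nat filter \<times> real \<Rightarrow> (real \<Rightarrow> real) \<Rightarrow> real" where
  "chi \<omega> f = Lim (omega_filter \<omega>)
      (\<lambda>x. exp (- x) * (LINT t:{0..x}|lebesgue. f t * exp t))"

end

theory Submission
  imports Defs
begin


lemma ultra_filtermap:
  assumes "is_ultrafilter F" shows "is_ultrafilter (filtermap g F)"
  using assms unfolding is_ultrafilter_def by (auto simp: eventually_filtermap filtermap_bot_iff)

lemma ultra_tendsto_exists:
  fixes \<phi> :: "'a \<Rightarrow> real"
  assumes U: "is_ultrafilter F" and B: "eventually (\<lambda>s. \<bar>\<phi> s\<bar> \<le> B) F"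
  shows "\<exists>L. (\<phi> \<longlongrightarrow> L) F"
proof -
  let ?G = "filtermap \<phi> F"
  have Gbot: "?G \<noteq> bot" using U by (simp add: is_ultrafilter_def filtermap_bot_iff)
  have "eventually (\<lambda>x. x \<in> {-B..B}) ?G" using B by (simp add: eventually_filtermap abs_le_iff) (auto elim: eventually_mono)
  then obtain x where x: "inf (nhds x) ?G \<noteq> bot"
    using compact_filter[THEN iffD1, rule_format, OF compact_Icc[of "-B" B] Gbot] by blast
  have "(\<phi> \<longlongrightarrow> x) F"
    unfolding tendsto_def
  proof (intro allI impI)
    fix S :: "real set" assume S: "open S" "x \<in> S"
    show "eventually (\<lambda>s. \<phi> s \<in> S) F"
    proof (rule ccontr)
      assume "\<not> eventually (\<lambda>s. \<phi> s \<in> S) F"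
      with U have "eventually (\<lambda>s. \<phi> s \<notin> S) F" unfolding is_ultrafilter_def by blast
      hence e1: "eventually (\<lambda>y. y \<notin> S) ?G" by (simp add: eventually_filtermap)
      have e2: "eventually (\<lambda>y. y \<in> S) (nhds x)" using S by (rule eventually_nhds_in_open)
      have "eventually (\<lambda>y. False) (inf (nhds x) ?G)"
        using eventually_inf[of "\<lambda>y. False" "nhds x" ?G] e1 e2 by blast
      with x show False by (simp add: eventually_False)
    qed
  qed
  thus ?thesis by blast
qed


lemma AE_lebesgue_affine:
  fixes c t :: real
  assumes P: "AE x in lebesgue. P x" and c: "c \<noteq> 0"
  shows "AE x in lebesgue. P (t + c * x)"
proof -
  have eq: "lebesgue = density (distr lebesgue lebesgue (\<lambda>x. t + c * x)) (\<lambda>_. ennreal \<bar>c\<bar>)"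
    using lebesgue_real_affine[OF c] by simp
  have "AE x in density (distr lebesgue lebesgue (\<lambda>x. t + c * x)) (\<lambda>_. ennreal \<bar>c\<bar>). P x"
    using P by (subst (asm) eq)
  hence "AE x in distr lebesgue lebesgue (\<lambda>x. t + c * x). 0 < ennreal \<bar>c\<bar> \<longrightarrow> P x"
    by (subst (asm) AE_density) auto
  hence "AE x in distr lebesgue lebesgue (\<lambda>x. t + c * x). P x"
    using c by simp
  moreover have "(\<lambda>x. t + c * x) \<in> lebesgue \<rightarrow>\<^sub>M lebesgue"
    using lebesgue_affine_measurable[where c= "\<lambda>x::real. c"] c by simp
  ultimately show ?thesis by (rule AE_distrD[rotated])
qed

lemma measurable_lebesgue_affine:
  fixes c t :: real and g :: "real \<Rightarrow> real"
  assumes "g \<in> borel_measurable lebesgue" and c: "c \<noteq> 0"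
  shows "(\<lambda>x. g (t + c * x)) \<in> borel_measurable lebesgue"
  using borel_measurable_affine[OF assms, of t] by simp

lemma exp_minus_set_integrable:
  "set_integrable lebesgue {c..} (\<lambda>x::real. exp (- x))"
  "(LINT x:{c..}|lebesgue. exp (- x)) = exp (- c)"
proof -
  have h: "((\<lambda>x::real. exp (-1*x)) has_integral exp (-1*c)/1) {c..}"
    by (rule has_integral_exp_minus_to_infinity) simp
  hence h': "((\<lambda>x::real. exp (- x)) has_integral exp (- c)) {c..}" by simp
  show si: "set_integrable lebesgue {c..} (\<lambda>x::real. exp (- x))"
    using h' by (intro nonnegative_absolutely_integrable_1) (auto simp: integrable_on_def)
  show "(LINT x:{c..}|lebesgue. exp (- x)) = exp (- c)"
    using set_lebesgue_integral_eq_integral(2)[OF si] h' by (simp add: integral_unique)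
qed

locale WS =
  fixes f :: "real \<Rightarrow> real" and C :: real and F :: "real filter"
  assumes fmeas: "(\<lambda>x. indicator {0..} x * f x) \<in> borel_measurable lebesgue"
    and fbd: "AE x in lebesgue. x \<in> {0..} \<longrightarrow> \<bar>f x\<bar> \<le> C"
    and C0: "0 \<le> C"
    and U: "is_ultrafilter F" and Fpos: "eventually (\<lambda>s. 0 \<le> s) F"
begin

definition w :: "real \<Rightarrow> real" where "w x = indicator {0..} x * exp (- x)"
definition W :: "real measure" where "W = density lebesgue (\<lambda>x. ennreal (w x))"
definition fs :: "real \<Rightarrow> real \<Rightarrow> real" where "fs s x = indicator {0..} (s + x) * f (s + x)"
definition Psi :: "real \<Rightarrow> (real \<Rightarrow> real) \<Rightarrow> real" where "Psi s u = (\<integral>x. fs s x * u x \<partial>W)"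
definition Lam :: "(real \<Rightarrow> real) \<Rightarrow> real" where "Lam u = Lim F (\<lambda>s. Psi s u)"

lemma Fnbot: "F \<noteq> bot" using U by (simp add: is_ultrafilter_def)

lemma w_meas[measurable]: "w \<in> borel_measurable lebesgue"
  unfolding w_def by (intro measurable_completion) measurable

lemma w_nonneg: "0 \<le> w x" unfolding w_def by auto

lemma sets_W[simp]: "sets W = sets lebesgue" and space_W[simp]: "space W = UNIV"
  unfolding W_def by auto

lemma meas_W: "(g::real\<Rightarrow>real) \<in> borel_measurable W \<longleftrightarrow> g \<in> borel_measurable lebesgue"
proof -
  have "measurable W (borel::real measure) = measurable lebesgue borel" by (rule measurable_cong_sets) auto
  thus ?thesis by (simp only:)
qed

lemma w_integrable: "integrable lebesgue w"
proof -
  have "(\<lambda>x. indicator {0..} x *\<^sub>R exp (- x)) = w" by (auto simp: w_def fun_eq_iff)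
  thus ?thesis using exp_minus_set_integrable(1)[of 0] unfolding set_integrable_def by simp
qed

lemma fin_W: "finite_measure W"
proof
  have "emeasure W UNIV = (\<integral>\<^sup>+x. ennreal (w x) \<partial>lebesgue)"
    unfolding W_def by (simp add: emeasure_density)
  also have "\<dots> < \<infinity>"
    using w_integrable unfolding integrable_iff_bounded by (simp add: w_nonneg)
  finally show "emeasure W (space W) \<noteq> \<infinity>" by simp
qed

interpretation W: finite_measure W by (rule fin_W)

lemma AE_W_iff: "(AE x in W. P x) \<longleftrightarrow> (AE x in lebesgue. 0 < w x \<longrightarrow> P x)"
  unfolding W_def by (subst AE_density) (auto simp: w_nonneg)

lemma AE_W: "AE x in lebesgue. P x \<Longrightarrow> AE x in W. P x"
  unfolding AE_W_iff by (auto elim: eventually_mono)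

lemma fs_meas[measurable]: "fs s \<in> borel_measurable lebesgue"
  unfolding fs_def using measurable_lebesgue_affine[OF fmeas, of 1 s] by simp

lemma fs_bd: "AE x in W. \<bar>fs s x\<bar> \<le> C"
proof (rule AE_W)
  have "AE x in lebesgue. s + 1 * x \<in> {0..} \<longrightarrow> \<bar>f (s + 1 * x)\<bar> \<le> C"
    by (rule AE_lebesgue_affine[OF fbd]) simp
  thus "AE x in lebesgue. \<bar>fs s x\<bar> \<le> C"
    by eventually_elim (use C0 in \<open>auto simp: fs_def indicator_def\<close>)
qed

lemma fs_u_integrable:
  assumes u: "integrable W u" shows "integrable W (\<lambda>x. fs s x * u x)"
proof (rule Bochner_Integration.integrable_bound[where f="\<lambda>x. C * u x"])
  show "integrable W (\<lambda>x. C * u x)" using u by simp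
  have "fs s \<in> borel_measurable W" unfolding meas_W by (rule fs_meas)
  moreover have "u \<in> borel_measurable W" using u by (rule borel_measurable_integrable)
  ultimately show "(\<lambda>x. fs s x * u x) \<in> borel_measurable W" by (rule borel_measurable_times)
  show "AE x in W. norm (fs s x * u x) \<le> norm (C * u x)"
    using fs_bd[of s] by eventually_elim (use C0 in \<open>auto simp: abs_mult intro: mult_right_mono\<close>)
qed

lemma Psi_bd:
  assumes u: "integrable W u" shows "\<bar>Psi s u\<bar> \<le> C * (\<integral>x. \<bar>u x\<bar> \<partial>W)"
proof -
  have "\<bar>Psi s u\<bar> \<le> (\<integral>x. \<bar>fs s x * u x\<bar> \<partial>W)"
    unfolding Psi_def using integral_abs_bound by blast
  also have "\<dots> \<le> (\<integral>x. C * \<bar>u x\<bar> \<partial>W)"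
  proof (rule integral_mono_AE)
    show "integrable W (\<lambda>x. \<bar>fs s x * u x\<bar>)" using fs_u_integrable[OF u] by simp
    show "integrable W (\<lambda>x. C * \<bar>u x\<bar>)" using u by simp
    show "AE x in W. \<bar>fs s x * u x\<bar> \<le> C * \<bar>u x\<bar>"
      using fs_bd[of s] by eventually_elim (auto simp: abs_mult intro: mult_right_mono)
  qed
  finally show ?thesis by simp
qed

lemma Lam_tendsto:
  assumes u: "integrable W u" shows "((\<lambda>s. Psi s u) \<longlongrightarrow> Lam u) F"
proof -
  have "eventually (\<lambda>s. \<bar>Psi s u\<bar> \<le> C * (\<integral>x. \<bar>u x\<bar> \<partial>W)) F"
    using Psi_bd[OF u] by (intro always_eventually) blast
  from ultra_tendsto_exists[OF U this] obtain L where "((\<lambda>s. Psi s u) \<longlongrightarrow> L) F"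
    by blast
  moreover hence "Lam u = L" unfolding Lam_def using Fnbot by (intro tendsto_Lim) auto
  ultimately show ?thesis by simp
qed

lemma Lam_bd:
  assumes u: "integrable W u" shows "\<bar>Lam u\<bar> \<le> C * (\<integral>x. \<bar>u x\<bar> \<partial>W)"
proof -
  have "eventually (\<lambda>s. \<bar>Psi s u\<bar> \<le> C * (\<integral>x. \<bar>u x\<bar> \<partial>W)) F"
    using Psi_bd[OF u] by (intro always_eventually) blast
  thus ?thesis using tendsto_upperbound[OF tendsto_rabs[OF Lam_tendsto[OF u]] _ Fnbot] by blast
qed

lemma Lam_add:
  assumes u: "integrable W u" and v: "integrable W v"
  shows "Lam (\<lambda>x. u x + v x) = Lam u + Lam v"
proof -
  have "Psi s (\<lambda>x. u x + v x) = Psi s u + Psi s v" for s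
    unfolding Psi_def using fs_u_integrable[OF u] fs_u_integrable[OF v]
    by (simp add: distrib_left)
  hence "((\<lambda>s. Psi s (\<lambda>x. u x + v x)) \<longlongrightarrow> Lam u + Lam v) F"
    using tendsto_add[OF Lam_tendsto[OF u] Lam_tendsto[OF v]] by simp
  moreover have "((\<lambda>s. Psi s (\<lambda>x. u x + v x)) \<longlongrightarrow> Lam (\<lambda>x. u x + v x)) F"
    using u v by (intro Lam_tendsto) auto
  ultimately show ?thesis using tendsto_unique[OF Fnbot] by blast
qed

lemma Lam_cmult:
  assumes u: "integrable W u"
  shows "Lam (\<lambda>x. c * u x) = c * Lam u"
proof -
  have "Psi s (\<lambda>x. c * u x) = c * Psi s u" for s
    unfolding Psi_def by (simp add: mult.left_commute)
  hence "((\<lambda>s. Psi s (\<lambda>x. c * u x)) \<longlongrightarrow> c * Lam u) F"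
    using tendsto_mult_left[OF Lam_tendsto[OF u]] by simp
  moreover have "((\<lambda>s. Psi s (\<lambda>x. c * u x)) \<longlongrightarrow> Lam (\<lambda>x. c * u x)) F"
    using u by (intro Lam_tendsto) auto
  ultimately show ?thesis using tendsto_unique[OF Fnbot] by blast
qed

lemma Lam_diff:
  assumes u: "integrable W u" and v: "integrable W v"
  shows "Lam (\<lambda>x. u x - v x) = Lam u - Lam v"
proof -
  have "Lam (\<lambda>x. u x + (-1) * v x) = Lam u + Lam (\<lambda>x. (-1) * v x)"
    using u v by (intro Lam_add) auto
  thus ?thesis using Lam_cmult[OF v, of "-1"] by simp
qed

end


context WS begin

interpretation W: finite_measure W by (rule fin_W)

lemma ind_int: "A \<in> sets lebesgue \<Longrightarrow> integrable W (indicator A :: real \<Rightarrow> real)"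
  by (intro integrable_real_indicator) (auto simp: less_top[symmetric])

lemma int_abs_ind: "(\<integral>x. \<bar>indicator A x :: real\<bar> \<partial>W) = measure W A"
  by simp

lemma Lam_ind_bd: "A \<in> sets lebesgue \<Longrightarrow> \<bar>Lam (indicator A)\<bar> \<le> C * measure W A"
  using Lam_bd[OF ind_int, of A] by simp

lemma Lam_zero: "Lam (\<lambda>x. 0) = 0"
  using Lam_cmult[of "\<lambda>x. 0" 0] by simp

definition r :: "real set \<Rightarrow> real" where "r A = Lam (indicator A) + C * measure W A"
definition nu :: "real set \<Rightarrow> ennreal" where "nu A = ennreal (r A)"

lemma r_nonneg: "A \<in> sets lebesgue \<Longrightarrow> 0 \<le> r A"
  using Lam_ind_bd[of A] unfolding r_def by linarith

lemma Lam_ind_Un: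
  assumes "A \<in> sets lebesgue" "B \<in> sets lebesgue" "A \<inter> B = {}"
  shows "Lam (indicator (A \<union> B)) = Lam (indicator A) + Lam (indicator B)"
proof -
  have "indicator (A \<union> B) = (\<lambda>x. indicator A x + indicator B x :: real)"
    using assms(3) by (auto simp: fun_eq_iff indicator_def)
  thus ?thesis using Lam_add[OF ind_int ind_int] assms by simp
qed

lemma r_Un:
  assumes "A \<in> sets lebesgue" "B \<in> sets lebesgue" "A \<inter> B = {}"
  shows "r (A \<union> B) = r A + r B"
proof -
  have "measure W (A \<union> B) = measure W A + measure W B"
    using assms by (intro W.finite_measure_Union) auto
  thus ?thesis unfolding r_def using Lam_ind_Un[OF assms] by (simp add: algebra_simps)
qed

lemma ind_empty: "indicator {} = (\<lambda>x. 0::real)" by (auto simp: fun_eq_iff)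

lemma r_empty: "r {} = 0" unfolding r_def by (simp add: ind_empty Lam_zero)

lemma r_sums:
  assumes A: "range A \<subseteq> sets lebesgue" and dis: "disjoint_family A"
  shows "(\<lambda>i. r (A i)) sums r (\<Union> (range A))"
proof -
  define B where "B n = (\<Union>i<n. A i)" for n
  have Bs: "B n \<in> sets lebesgue" for n unfolding B_def using A by (intro sets.finite_UN) auto
  have part: "(\<Sum>i<n. r (A i)) = r (B n)" for n
  proof (induction n)
    case 0 show ?case by (simp add: B_def r_empty)
  next
    case (Suc n)
    have "B (Suc n) = B n \<union> A n" by (auto simp: B_def lessThan_Suc)
    moreover have "B n \<inter> A n = {}"
    proof -
      have False if "i < n" "x \<in> A i" "x \<in> A n" for x i
        using dis[unfolded disjoint_family_on_def, rule_format, of i n] that by auto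
      thus ?thesis unfolding B_def by blast
    qed
    moreover have "A n \<in> sets lebesgue" using A by auto
    ultimately have "r (B (Suc n)) = r (B n) + r (A n)" using r_Un[OF Bs, of "A n" n] by simp
    thus ?case using Suc.IH by simp
  qed
  let ?B = "\<Union>(range A)"
  have UB: "(\<Union>n. B n) = ?B" by (auto simp: B_def)
  have inc: "incseq B" unfolding incseq_def B_def by (auto intro: order_less_le_trans)
  have Bsub: "B n \<subseteq> ?B" for n by (auto simp: B_def)
  have Bms: "?B \<in> sets lebesgue" using A by (rule sets.countable_UN)
  have Bd: "?B - B n \<in> sets lebesgue" for n using Bms Bs by (rule sets.Diff)
  have m1: "(\<lambda>n. measure W (B n)) \<longlonglongrightarrow> measure W ?B"
  proof -
    have "range B \<subseteq> sets W" using Bs by auto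
    from W.finite_Lim_measure_incseq[OF this inc] show ?thesis unfolding UB .
  qed
  have d: "Lam (indicator ?B) - Lam (indicator (B n)) = Lam (indicator (?B - B n))" for n
  proof -
    have "B n \<union> (?B - B n) = ?B" using Bsub[of n] by blast
    moreover have "B n \<inter> (?B - B n) = {}" by blast
    ultimately show ?thesis using Lam_ind_Un[OF Bs Bd, of n n] by simp
  qed
  have dm: "measure W (?B - B n) = measure W ?B - measure W (B n)" for n
    using W.finite_measure_Diff[of ?B "B n"] Bs[of n] Bms Bsub[of n] by simp
  have "(\<lambda>n. Lam (indicator ?B) - Lam (indicator (B n))) \<longlonglongrightarrow> 0"
  proof (rule Lim_null_comparison)
    show "eventually (\<lambda>n. norm (Lam (indicator ?B) - Lam (indicator (B n))) \<le> C * (measure W ?B - measure W (B n))) sequentially"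
    proof (intro always_eventually allI)
      fix n show "norm (Lam (indicator ?B) - Lam (indicator (B n))) \<le> C * (measure W ?B - measure W (B n))"
        using Lam_ind_bd[OF Bd, of n] unfolding d dm by simp
    qed
    have lim0: "(\<lambda>n. measure W ?B - measure W (B n)) \<longlonglongrightarrow> measure W ?B - measure W ?B"
      by (intro tendsto_diff tendsto_const m1)
    show "(\<lambda>n. C * (measure W ?B - measure W (B n))) \<longlonglongrightarrow> 0"
      using tendsto_mult_left[OF lim0, of C] by simp
  qed
  hence "(\<lambda>n. Lam (indicator ?B) - (Lam (indicator ?B) - Lam (indicator (B n)))) \<longlonglongrightarrow> Lam (indicator ?B) - 0"
    by (intro tendsto_diff tendsto_const)
  hence "(\<lambda>n. Lam (indicator (B n))) \<longlonglongrightarrow> Lam (indicator ?B)" by simp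
  hence "(\<lambda>n. r (B n)) \<longlonglongrightarrow> r ?B" unfolding r_def using m1 by (intro tendsto_add tendsto_mult_left)
  thus ?thesis unfolding sums_def using part by simp
qed

lemma nu_ca: "countably_additive (sets lebesgue) nu"
  unfolding countably_additive_def
proof (intro allI impI)
  fix A :: "nat \<Rightarrow> real set"
  assume A: "range A \<subseteq> sets lebesgue" and dis: "disjoint_family A"
  have s: "(\<lambda>i. r (A i)) sums r (\<Union> (range A))" by (rule r_sums[OF A dis])
  have "(\<Sum>i. nu (A i)) = ennreal (\<Sum>i. r (A i))"
    unfolding nu_def using A s by (intro suminf_ennreal2) (auto intro: r_nonneg sums_summable)
  also have "\<dots> = nu (\<Union> (range A))" unfolding nu_def using s by (simp add: sums_unique[symmetric])
  finally show "(\<Sum>i. nu (A i)) = nu (\<Union> (range A))" .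
qed

definition NN :: "real measure" where "NN = measure_of UNIV (sets lebesgue) nu"

lemma sa: "sigma_algebra UNIV (sets lebesgue)"
  using sets.sigma_algebra_axioms[of lebesgue] by simp

lemma emeasure_NN: "A \<in> sets lebesgue \<Longrightarrow> emeasure NN A = nu A"
  unfolding NN_def
  by (rule emeasure_measure_of_sigma[OF sa _ nu_ca]) (auto simp: positive_def nu_def r_empty)

lemma sets_NN: "sets NN = sets W"
  unfolding NN_def using sigma_algebra.sigma_sets_eq[OF sa]
  by (subst sets_measure_of) auto

lemma RN: "\<exists>\<rho>\<in>borel_measurable W. density W \<rho> = NN"
proof (rule W.Radon_Nikodym)
  show "sets NN = sets W" by (rule sets_NN)
  show "absolutely_continuous W NN"
    unfolding absolutely_continuous_def
  proof
    fix A assume "A \<in> null_sets W"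
    hence A: "A \<in> sets lebesgue" "measure W A = 0"
      using null_setsD1[of A W] null_setsD2[of A W] by (simp_all add: measure_def)
    hence "r A = 0" using Lam_ind_bd[OF A(1)] unfolding r_def by simp
    hence "emeasure NN A = 0" using emeasure_NN[OF A(1)] by (simp add: nu_def)
    moreover have "A \<in> sets NN" using A(1) sets_NN by simp
    ultimately show "A \<in> null_sets NN" by (rule null_setsI)
  qed
qed

end


context WS begin

interpretation W: finite_measure W by (rule fin_W)

definition rho :: "real \<Rightarrow> ennreal" where
  "rho = (SOME \<rho>. \<rho> \<in> borel_measurable W \<and> density W \<rho> = NN)"

lemma rho: "rho \<in> borel_measurable W" "density W rho = NN"
proof -
  have "\<exists>\<rho>. \<rho> \<in> borel_measurable W \<and> density W \<rho> = NN" using RN by blast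
  from someI_ex[OF this] show "rho \<in> borel_measurable W" "density W rho = NN"
    unfolding rho_def by auto
qed

lemma rho_meas[measurable]: "rho \<in> borel_measurable lebesgue"
proof -
  have "measurable W (borel::ennreal measure) = measurable lebesgue borel"
    by (rule measurable_cong_sets) auto
  thus ?thesis using rho(1) by (simp only:)
qed

lemma rho_int: assumes A: "A \<in> sets lebesgue"
  shows "(\<integral>\<^sup>+x. rho x * indicator A x \<partial>W) = nu A"
proof -
  have "emeasure (density W rho) A = (\<integral>\<^sup>+x. rho x * indicator A x \<partial>W)"
    using A by (intro emeasure_density rho(1)) simp
  thus ?thesis using rho(2) emeasure_NN[OF A] by simp
qed

lemma rho_AE: "AE x in W. rho x \<noteq> \<infinity>"
proof (rule nn_integral_PInf_AE[OF rho(1)])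
  have "(\<integral>\<^sup>+x. rho x \<partial>W) = (\<integral>\<^sup>+x. rho x * indicator UNIV x \<partial>W)" by simp
  also have "\<dots> = nu UNIV" by (rule rho_int) simp
  finally show "(\<integral>\<^sup>+x. rho x \<partial>W) \<noteq> \<infinity>" by (simp add: nu_def)
qed

definition g0 :: "real \<Rightarrow> real" where "g0 x = enn2real (rho x)"
definition g1 :: "real \<Rightarrow> real" where "g1 x = g0 x - C"

lemma g0_meas[measurable]: "g0 \<in> borel_measurable lebesgue"
  unfolding g0_def by measurable

lemma g1_meas[measurable]: "g1 \<in> borel_measurable lebesgue"
  unfolding g1_def by measurable

lemma g1_measW: "g1 \<in> borel_measurable W"
  using g1_meas meas_W by blast

lemma g0_ind: assumes A: "A \<in> sets lebesgue"
  shows "integrable W (\<lambda>x. g0 x * indicator A x)" "(\<integral>x. g0 x * indicator A x \<partial>W) = r A"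
proof -
  have eq: "AE x in W. ennreal (g0 x * indicator A x) = rho x * indicator A x"
    using rho_AE by eventually_elim (auto simp: g0_def indicator_def less_top)
  have nn: "(\<integral>\<^sup>+x. ennreal (g0 x * indicator A x) \<partial>W) = ennreal (r A)"
    using nn_integral_cong_AE[OF eq] rho_int[OF A] by (simp add: nu_def)
  have m: "(\<lambda>x. g0 x * indicator A x) \<in> borel_measurable W"
    using A by (simp add: meas_W)
  show int: "integrable W (\<lambda>x. g0 x * indicator A x)"
    using m nn by (intro integrableI_nonneg) (auto simp: g0_def)
  have "ennreal (\<integral>x. g0 x * indicator A x \<partial>W) = ennreal (r A)"
    using nn_integral_eq_integral[OF int] nn by (simp add: g0_def)
  moreover have "0 \<le> (\<integral>x. g0 x * indicator A x \<partial>W)"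
    by (intro integral_nonneg_AE) (auto simp: g0_def)
  ultimately show "(\<integral>x. g0 x * indicator A x \<partial>W) = r A"
    using r_nonneg[OF A] by simp
qed

lemma g1_ind: assumes A: "A \<in> sets lebesgue"
  shows "integrable W (\<lambda>x. g1 x * indicator A x)" "(\<integral>x. g1 x * indicator A x \<partial>W) = Lam (indicator A)"
proof -
  have e: "(\<lambda>x. g1 x * indicator A x) = (\<lambda>x. g0 x * indicator A x - C * indicator A x)"
    by (auto simp: g1_def fun_eq_iff algebra_simps)
  have i2: "integrable W (\<lambda>x. C * indicator A x :: real)" using ind_int[OF A] by simp
  show "integrable W (\<lambda>x. g1 x * indicator A x)" unfolding e using g0_ind(1)[OF A] i2 by simp
  have "(\<integral>x. C * indicator A x \<partial>W) = C * measure W A" by simp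
  thus "(\<integral>x. g1 x * indicator A x \<partial>W) = Lam (indicator A)"
    unfolding e using g0_ind[OF A] i2 by (simp add: r_def)
qed

lemma g1_bd: "AE x in W. \<bar>g1 x\<bar> \<le> C"
proof -
  have B1: "{x. C < g1 x} \<in> sets lebesgue"
  proof -
    have "{x \<in> space lebesgue. C < g1 x} \<in> sets lebesgue" by measurable
    thus ?thesis by simp
  qed
  have B2: "{x. g1 x < - C} \<in> sets lebesgue"
  proof -
    have "{x \<in> space lebesgue. g1 x < - C} \<in> sets lebesgue" by measurable
    thus ?thesis by simp
  qed
  let ?B1 = "{x. C < g1 x}" and ?B2 = "{x. g1 x < - C}"
  have i1: "integrable W (\<lambda>x. (g1 x - C) * indicator ?B1 x)"
  proof -
    have "(\<lambda>x. (g1 x - C) * indicator ?B1 x) = (\<lambda>x. g1 x * indicator ?B1 x - C * indicator ?B1 x)"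
      by (auto simp: fun_eq_iff algebra_simps)
    thus ?thesis using g1_ind(1)[OF B1] ind_int[OF B1] by simp
  qed
  have "(\<integral>x. (g1 x - C) * indicator ?B1 x \<partial>W) = Lam (indicator ?B1) - C * measure W ?B1"
  proof -
    have "(\<lambda>x. (g1 x - C) * indicator ?B1 x) = (\<lambda>x. g1 x * indicator ?B1 x - C * indicator ?B1 x)"
      by (auto simp: fun_eq_iff algebra_simps)
    thus ?thesis using g1_ind[OF B1] ind_int[OF B1] by simp
  qed
  also have "\<dots> \<le> 0" using Lam_ind_bd[OF B1] by simp
  finally have le1: "(\<integral>x. (g1 x - C) * indicator ?B1 x \<partial>W) \<le> 0" .
  have nn1: "AE x in W. 0 \<le> (g1 x - C) * indicator ?B1 x" by (auto simp: indicator_def)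
  have "(\<integral>x. (g1 x - C) * indicator ?B1 x \<partial>W) = 0"
    using le1 integral_nonneg_AE[OF nn1] by simp
  hence ae1: "AE x in W. (g1 x - C) * indicator ?B1 x = 0"
    using integral_nonneg_eq_0_iff_AE[OF i1 nn1] by simp
  have i2: "integrable W (\<lambda>x. (- C - g1 x) * indicator ?B2 x)"
  proof -
    have "(\<lambda>x. (- C - g1 x) * indicator ?B2 x) = (\<lambda>x. (-C) * indicator ?B2 x - g1 x * indicator ?B2 x)"
      by (auto simp: fun_eq_iff algebra_simps)
    thus ?thesis using g1_ind(1)[OF B2] ind_int[OF B2] by simp
  qed
  have "(\<integral>x. (- C - g1 x) * indicator ?B2 x \<partial>W) = - C * measure W ?B2 - Lam (indicator ?B2)"
  proof -
    have "(\<lambda>x. (- C - g1 x) * indicator ?B2 x) = (\<lambda>x. (-C) * indicator ?B2 x - g1 x * indicator ?B2 x)"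
      by (auto simp: fun_eq_iff algebra_simps)
    thus ?thesis using g1_ind[OF B2] ind_int[OF B2] by simp
  qed
  also have "\<dots> \<le> 0" using Lam_ind_bd[OF B2] by simp
  finally have le2: "(\<integral>x. (- C - g1 x) * indicator ?B2 x \<partial>W) \<le> 0" .
  have nn2: "AE x in W. 0 \<le> (- C - g1 x) * indicator ?B2 x" by (auto simp: indicator_def)
  have "(\<integral>x. (- C - g1 x) * indicator ?B2 x \<partial>W) = 0"
    using le2 integral_nonneg_AE[OF nn2] by simp
  hence ae2: "AE x in W. (- C - g1 x) * indicator ?B2 x = 0"
    using integral_nonneg_eq_0_iff_AE[OF i2 nn2] by simp
  show ?thesis using ae1 ae2
    by eventually_elim (auto simp: indicator_def split: if_splits)
qed

lemma g1_u_int: assumes u: "integrable W u" shows "integrable W (\<lambda>x. g1 x * u x)"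
proof (rule Bochner_Integration.integrable_bound[where f="\<lambda>x. C * u x"])
  show "integrable W (\<lambda>x. C * u x)" using u by simp
  have "u \<in> borel_measurable W" using u by (rule borel_measurable_integrable)
  thus "(\<lambda>x. g1 x * u x) \<in> borel_measurable W" using g1_measW by (intro borel_measurable_times)
  show "AE x in W. norm (g1 x * u x) \<le> norm (C * u x)"
    using g1_bd by eventually_elim (use C0 in \<open>auto simp: abs_mult intro: mult_right_mono\<close>)
qed

lemma Lam_rep: assumes u: "integrable W u" shows "Lam u = (\<integral>x. g1 x * u x \<partial>W)"
  using u
proof (induction rule: integrable_induct)
  case (base A c)
  have A: "A \<in> sets lebesgue" using base by simp
  have "Lam (\<lambda>x. indicator A x *\<^sub>R c) = Lam (\<lambda>x. c * indicator A x)"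
    by (simp add: mult.commute)
  also have "\<dots> = c * Lam (indicator A)" by (rule Lam_cmult[OF ind_int[OF A]])
  also have "\<dots> = c * (\<integral>x. g1 x * indicator A x \<partial>W)" using g1_ind(2)[OF A] by simp
  also have "\<dots> = (\<integral>x. g1 x * (indicator A x *\<^sub>R c) \<partial>W)"
    by (simp add: mult_ac)
  finally show ?case .
next
  case (add u v)
  have "Lam (\<lambda>x. u x + v x) = Lam u + Lam v" by (rule Lam_add[OF \<open>integrable W u\<close> \<open>integrable W v\<close>])
  also have "\<dots> = (\<integral>x. g1 x * u x \<partial>W) + (\<integral>x. g1 x * v x \<partial>W)" using add by simp
  also have "\<dots> = (\<integral>x. g1 x * u x + g1 x * v x \<partial>W)"
    using g1_u_int[OF \<open>integrable W u\<close>] g1_u_int[OF \<open>integrable W v\<close>] by simp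
  finally show ?case by (simp add: distrib_left)
next
  case (lim u s)
  have um: "u \<in> borel_measurable W" using lim(4) by (rule borel_measurable_integrable)
  have sm: "s i \<in> borel_measurable W" for i using lim(1) by (rule borel_measurable_integrable)
  have L1: "(\<lambda>i. \<integral>x. \<bar>s i x - u x\<bar> \<partial>W) \<longlonglongrightarrow> (\<integral>x. 0 \<partial>W)"
  proof (rule integral_dominated_convergence[where w="\<lambda>x. 3 * \<bar>u x\<bar>"])
    show "(\<lambda>x. 0::real) \<in> borel_measurable W" by simp
    show "(\<lambda>x. \<bar>s i x - u x\<bar>) \<in> borel_measurable W" for i using sm um by measurable
    show "integrable W (\<lambda>x. 3 * \<bar>u x\<bar>)" using lim(4) by simp
    show "AE x in W. (\<lambda>i. \<bar>s i x - u x\<bar>) \<longlonglongrightarrow> 0"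
    proof (rule AE_I2)
      fix x assume "x \<in> space W"
      hence "(\<lambda>i. s i x - u x) \<longlonglongrightarrow> u x - u x" using lim(2) by (intro tendsto_diff) auto
      hence "(\<lambda>i. \<bar>s i x - u x\<bar>) \<longlonglongrightarrow> \<bar>u x - u x\<bar>" by (rule tendsto_rabs)
      thus "(\<lambda>i. \<bar>s i x - u x\<bar>) \<longlonglongrightarrow> 0" by simp
    qed
    show "AE x in W. norm (\<bar>s i x - u x\<bar>) \<le> 3 * \<bar>u x\<bar>" for i
    proof (rule AE_I2)
      fix x assume "x \<in> space W"
      hence "\<bar>s i x\<bar> \<le> 2 * \<bar>u x\<bar>" using lim(3) by simp
      thus "norm (\<bar>s i x - u x\<bar>) \<le> 3 * \<bar>u x\<bar>" by simp
    qed
  qed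
  have "(\<lambda>i. Lam (s i) - Lam u) \<longlonglongrightarrow> 0"
  proof (rule Lim_null_comparison)
    show "eventually (\<lambda>i. norm (Lam (s i) - Lam u) \<le> C * (\<integral>x. \<bar>s i x - u x\<bar> \<partial>W)) sequentially"
    proof (intro always_eventually allI)
      fix i
      have "Lam (s i) - Lam u = Lam (\<lambda>x. s i x - u x)" using Lam_diff[OF lim(1) lim(4)] by simp
      thus "norm (Lam (s i) - Lam u) \<le> C * (\<integral>x. \<bar>s i x - u x\<bar> \<partial>W)"
        using Lam_bd[of "\<lambda>x. s i x - u x"] lim(1) lim(4) by simp
    qed
    show "(\<lambda>i. C * (\<integral>x. \<bar>s i x - u x\<bar> \<partial>W)) \<longlonglongrightarrow> 0"
      using tendsto_mult_left[OF L1, of C] by simp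
  qed
  hence l1: "(\<lambda>i. Lam (s i)) \<longlonglongrightarrow> Lam u"
    using Lim_null[symmetric] by (simp add: LIM_zero_iff)
  have l2: "(\<lambda>i. \<integral>x. g1 x * s i x \<partial>W) \<longlonglongrightarrow> (\<integral>x. g1 x * u x \<partial>W)"
  proof (rule integral_dominated_convergence[where w="\<lambda>x. 2 * C * \<bar>u x\<bar>"])
    show "(\<lambda>x. g1 x * u x) \<in> borel_measurable W" using g1_measW um by measurable
    show "(\<lambda>x. g1 x * s i x) \<in> borel_measurable W" for i using g1_measW sm by measurable
    show "integrable W (\<lambda>x. 2 * C * \<bar>u x\<bar>)" using lim(4) by simp
    show "AE x in W. (\<lambda>i. g1 x * s i x) \<longlonglongrightarrow> g1 x * u x"
      using lim(2) by (intro AE_I2 tendsto_mult_left) auto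
    show "AE x in W. norm (g1 x * s i x) \<le> 2 * C * \<bar>u x\<bar>" for i
      using g1_bd
    proof eventually_elim
      case (elim x)
      have "\<bar>s i x\<bar> \<le> 2 * \<bar>u x\<bar>" using lim(3)[of x i] by simp
      hence "\<bar>g1 x\<bar> * \<bar>s i x\<bar> \<le> C * (2 * \<bar>u x\<bar>)"
        using elim C0 by (intro mult_mono) auto
      thus ?case by (simp add: abs_mult)
    qed
  qed
  have "(\<lambda>i. Lam (s i)) = (\<lambda>i. \<integral>x. g1 x * s i x \<partial>W)" using lim(5) by simp
  with l1 l2 show ?case using LIMSEQ_unique by metis
qed

lemma exists_g:
  "\<exists>g. g \<in> Linf_Rplus \<and> (\<forall>h\<in>L1_Rplus.
     ((\<lambda>s. LINT x:{0..}|lebesgue. f (x + s) * h x) \<longlongrightarrow> (LINT x:{0..}|lebesgue. g x * h x)) F)"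
proof (intro exI conjI ballI)
  show "g1 \<in> Linf_Rplus"
    unfolding Linf_Rplus_def
  proof (intro CollectI conjI exI)
    show "set_borel_measurable lebesgue {0..} g1"
    proof -
      have "(\<lambda>x::real. indicator {0..} x :: real) \<in> borel_measurable lebesgue"
        by (intro measurable_completion) measurable
      thus ?thesis unfolding set_borel_measurable_def using g1_meas by (intro borel_measurable_scaleR)
    qed
    show "AE x in lebesgue. x \<in> {0..} \<longrightarrow> \<bar>g1 x\<bar> \<le> C"
      using g1_bd unfolding AE_W_iff by eventually_elim (auto simp: w_def)
  qed
  fix h assume "h \<in> L1_Rplus"
  hence hi: "integrable lebesgue (\<lambda>x. indicator {0..} x * h x)"
    unfolding L1_Rplus_def set_integrable_def by simp
  define u where "u x = indicator {0..} x * h x * exp x" for x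
  have um: "u \<in> borel_measurable lebesgue"
  proof -
    have e: "(\<lambda>x::real. exp x) \<in> borel_measurable lebesgue"
      by (intro measurable_completion) measurable
    have "u = (\<lambda>x. (indicator {0..} x * h x) * exp x)" by (simp add: u_def fun_eq_iff)
    thus ?thesis using borel_measurable_integrable[OF hi] e by (simp add: borel_measurable_times)
  qed
  have wu: "(\<lambda>x. w x * u x) = (\<lambda>x. indicator {0..} x * h x)"
    by (auto simp: fun_eq_iff w_def u_def indicator_def exp_minus field_simps)
  have ui: "integrable W u"
    unfolding W_def using um hi wu by (subst integrable_density) (auto simp: w_nonneg)
  have P: "Psi s u = (LINT x:{0..}|lebesgue. f (x + s) * h x)" if "0 \<le> s" for s
  proof -
    have "Psi s u = (\<integral>x. w x * (fs s x * u x) \<partial>lebesgue)"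
      unfolding Psi_def W_def using um by (subst integral_density) (auto simp: w_nonneg)
    also have "\<dots> = (LINT x:{0..}|lebesgue. f (x + s) * h x)"
      unfolding set_lebesgue_integral_def using that
      by (intro Bochner_Integration.integral_cong)
         (auto simp: w_def u_def fs_def indicator_def exp_minus field_simps add.commute)
    finally show ?thesis .
  qed
  have R: "Lam u = (LINT x:{0..}|lebesgue. g1 x * h x)"
  proof -
    have "Lam u = (\<integral>x. g1 x * u x \<partial>W)" by (rule Lam_rep[OF ui])
    also have "\<dots> = (\<integral>x. w x * (g1 x * u x) \<partial>lebesgue)"
      unfolding W_def using um by (subst integral_density) (auto simp: w_nonneg)
    also have "\<dots> = (LINT x:{0..}|lebesgue. g1 x * h x)"
      unfolding set_lebesgue_integral_def
      by (intro Bochner_Integration.integral_cong)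
         (auto simp: w_def u_def indicator_def exp_minus field_simps)
    finally show ?thesis .
  qed
  have "((\<lambda>s. Psi s u) \<longlongrightarrow> Lam u) F" by (rule Lam_tendsto[OF ui])
  moreover have "eventually (\<lambda>s. Psi s u = (LINT x:{0..}|lebesgue. f (x + s) * h x)) F"
    using Fpos by eventually_elim (rule P)
  ultimately show "((\<lambda>s. LINT x:{0..}|lebesgue. f (x + s) * h x) \<longlongrightarrow> (LINT x:{0..}|lebesgue. g1 x * h x)) F"
    unfolding R by (rule Lim_transform_eventually)
qed

end


lemma omega_filter_ultra:
  assumes "is_ultrafilter (fst \<omega>)" shows "is_ultrafilter (omega_filter \<omega>)"
  unfolding omega_filter_def by (rule ultra_filtermap[OF assms])

lemma omega_filter_pos:
  assumes "0 \<le> snd \<omega>" shows "eventually (\<lambda>s. 0 \<le> s) (omega_filter \<omega>)"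
  unfolding omega_filter_def eventually_filtermap using assms by simp

lemma f_omega_wsl:
  assumes f: "f \<in> Linf_Rplus" and U: "is_ultrafilter (fst \<omega>)" and t: "0 \<le> snd \<omega>"
  shows "weak_star_lim f \<omega> (f_omega f \<omega>)"
proof -
  from f obtain C0 where fm: "set_borel_measurable lebesgue {0..} f"
    and C0: "AE x in lebesgue. x \<in> {0..} \<longrightarrow> \<bar>f x\<bar> \<le> C0"
    unfolding Linf_Rplus_def by auto
  have C: "AE x in lebesgue. x \<in> {0..} \<longrightarrow> \<bar>f x\<bar> \<le> \<bar>C0\<bar>"
    using C0 by eventually_elim auto
  interpret WS f "\<bar>C0\<bar>" "omega_filter \<omega>"
  proof
    show "(\<lambda>x. indicator {0..} x * f x) \<in> borel_measurable lebesgue"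
      using fm unfolding set_borel_measurable_def by simp
  qed (use C omega_filter_ultra[OF U] omega_filter_pos[OF t] in auto)
  from exists_g obtain g where "weak_star_lim f \<omega> g"
    unfolding weak_star_lim_def by blast
  thus ?thesis unfolding f_omega_def by (rule someI[of "weak_star_lim f \<omega>"])
qed

lemma Icc_fin: "emeasure lebesgue {a..b::real} < \<infinity>"
  using lmeasurable_cbox[of a b] unfolding fmeasurable_def cbox_interval by simp

lemma int_bound_helper:
  fixes \<phi> :: "real \<Rightarrow> real"
  assumes m: "\<phi> \<in> borel_measurable lebesgue" and b: "AE x in lebesgue. \<bar>\<phi> x\<bar> \<le> b * indicator B x"
    and B: "B \<in> sets lebesgue" "emeasure lebesgue B < \<infinity>"
  shows "integrable lebesgue \<phi>" "\<bar>integral\<^sup>L lebesgue \<phi>\<bar> \<le> b * measure lebesgue B"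
proof -
  have ib: "integrable lebesgue (\<lambda>x. b * indicator B x)" using B by simp
  show i: "integrable lebesgue \<phi>"
    by (rule Bochner_Integration.integrable_bound[OF ib m]) (use b in \<open>auto elim: eventually_mono\<close>)
  have "\<bar>integral\<^sup>L lebesgue \<phi>\<bar> \<le> (\<integral>x. \<bar>\<phi> x\<bar> \<partial>lebesgue)" by (rule integral_abs_bound)
  also have "\<dots> \<le> (\<integral>x. b * indicator B x \<partial>lebesgue)"
    using i ib b by (intro integral_mono_AE) auto
  also have "\<dots> = b * measure lebesgue B" by simp
  finally show "\<bar>integral\<^sup>L lebesgue \<phi>\<bar> \<le> b * measure lebesgue B" .
qed

lemma ind0_meas: "(\<lambda>x::real. indicator {0..} x :: real) \<in> borel_measurable lebesgue"
  by (intro measurable_completion) measurable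

lemma wsl_bound:
  assumes fm: "(\<lambda>x. indicator {0..} x * f x) \<in> borel_measurable lebesgue"
    and fb: "AE x in lebesgue. x \<in> {0..} \<longrightarrow> \<bar>f x\<bar> \<le> C" and C: "0 \<le> C"
    and ws: "weak_star_lim f \<omega> g" and U: "is_ultrafilter (fst \<omega>)" and t: "0 \<le> snd \<omega>"
  shows "AE x in lebesgue. 0 \<le> x \<longrightarrow> \<bar>g x\<bar> \<le> C"
proof -
  let ?F = "omega_filter \<omega>"
  have Fnb: "?F \<noteq> bot" using omega_filter_ultra[OF U] by (simp add: is_ultrafilter_def)
  from ws have gL: "g \<in> Linf_Rplus" and lim: "\<And>h. h \<in> L1_Rplus \<Longrightarrow>
        ((\<lambda>s. LINT x:{0..}|lebesgue. f (x + s) * h x) \<longlongrightarrow> (LINT x:{0..}|lebesgue. g x * h x)) ?F"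
    unfolding weak_star_lim_def by auto
  define gg where "gg x = indicator {0..} x * g x" for x
  have ggm: "gg \<in> borel_measurable lebesgue"
    using gL unfolding Linf_Rplus_def set_borel_measurable_def gg_def by simp
  have key: "\<bar>\<integral>x. gg x * indicator B x \<partial>lebesgue\<bar> \<le> C * measure lebesgue B"
    if B: "B \<in> sets lebesgue" "B \<subseteq> {0..R}" for B R
  proof -
    have Bf: "emeasure lebesgue B < \<infinity>"
    proof -
      have "emeasure lebesgue B \<le> emeasure lebesgue {0..R}" using B by (intro emeasure_mono) auto
      thus ?thesis using Icc_fin by (rule order_le_less_trans)
    qed
    have hL: "indicator B \<in> L1_Rplus"
    proof -
      have "(\<lambda>x. indicator {0..} x *\<^sub>R indicator B x :: real) = indicator B"
        using B by (auto simp: fun_eq_iff indicator_def)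
      thus ?thesis unfolding L1_Rplus_def set_integrable_def using B Bf by simp
    qed
    have bd: "\<bar>LINT x:{0..}|lebesgue. f (x + s) * indicator B x\<bar> \<le> C * measure lebesgue B"
      if s0: "0 \<le> s" for s
    proof -
      have eq: "(\<lambda>x. indicator {0..} x *\<^sub>R (f (x + s) * indicator B x)) =
                (\<lambda>x. (indicator {0..} (s + 1 * x) * f (s + 1 * x)) * indicator B x)"
        using B s0 by (auto simp: fun_eq_iff indicator_def add.commute)
      have m: "(\<lambda>x. (indicator {0..} (s + 1 * x) * f (s + 1 * x)) * indicator B x) \<in> borel_measurable lebesgue"
        by (rule borel_measurable_times[OF measurable_lebesgue_affine[OF fm, of 1 s] borel_measurable_indicator]) (use B in auto)
      have ae: "AE x in lebesgue. s + 1 * x \<in> {0..} \<longrightarrow> \<bar>f (s + 1 * x)\<bar> \<le> C"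
        by (rule AE_lebesgue_affine[OF fb]) simp
      have "AE x in lebesgue. \<bar>(indicator {0..} (s + 1 * x) * f (s + 1 * x)) * indicator B x\<bar> \<le> C * indicator B x"
        using ae by eventually_elim (use C in \<open>auto simp: indicator_def\<close>)
      from int_bound_helper(2)[OF m this B(1) Bf] show ?thesis
        unfolding set_lebesgue_integral_def eq .
    qed
    have ev: "eventually (\<lambda>s. \<bar>LINT x:{0..}|lebesgue. f (x + s) * indicator B x\<bar> \<le> C * measure lebesgue B) ?F"
      using omega_filter_pos[OF t] by eventually_elim (rule bd)
    have "\<bar>LINT x:{0..}|lebesgue. g x * indicator B x\<bar> \<le> C * measure lebesgue B"
      using tendsto_upperbound[OF tendsto_rabs[OF lim[OF hL]] ev Fnb] .
    moreover have "(LINT x:{0..}|lebesgue. g x * indicator B x) = (\<integral>x. gg x * indicator B x \<partial>lebesgue)"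
      unfolding set_lebesgue_integral_def gg_def by (simp add: mult_ac)
    ultimately show ?thesis by simp
  qed
  obtain C' where C': "AE x in lebesgue. x \<in> {0..} \<longrightarrow> \<bar>g x\<bar> \<le> C'"
    using gL unfolding Linf_Rplus_def by auto
  have ggb: "AE x in lebesgue. \<bar>gg x\<bar> \<le> \<bar>C'\<bar>"
    using C' by eventually_elim (auto simp: gg_def indicator_def)
  have ggi: "integrable lebesgue (\<lambda>x. gg x * indicator B x)"
    if B: "B \<in> sets lebesgue" "B \<subseteq> {0..R}" for B R
  proof -
    have "emeasure lebesgue B \<le> emeasure lebesgue {0..R}" using B by (intro emeasure_mono) auto
    hence Bf: "emeasure lebesgue B < \<infinity>" using Icc_fin by (rule order_le_less_trans)
    have m: "(\<lambda>x. gg x * indicator B x) \<in> borel_measurable lebesgue"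
      using ggm B by (intro borel_measurable_times) auto
    have "AE x in lebesgue. \<bar>gg x * indicator B x\<bar> \<le> \<bar>C'\<bar> * indicator B x"
      using ggb by eventually_elim (auto simp: indicator_def)
    from int_bound_helper(1)[OF m this B(1) Bf] show ?thesis .
  qed
  have ggmeas[measurable]: "gg \<in> borel_measurable lebesgue" by (rule ggm)
  define B1 where "B1 R = {0..real R} \<inter> {x. C < gg x}" for R :: nat
  define B2 where "B2 R = {0..real R} \<inter> {x. gg x < - C}" for R :: nat
  have B1s: "B1 R \<in> sets lebesgue" for R
  proof -
    have "{x \<in> space lebesgue. C < gg x} \<in> sets lebesgue" by measurable
    thus ?thesis unfolding B1_def by auto
  qed
  have B2s: "B2 R \<in> sets lebesgue" for R
  proof -
    have "{x \<in> space lebesgue. gg x < - C} \<in> sets lebesgue" by measurable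
    thus ?thesis unfolding B2_def by auto
  qed
  have B1sub: "B1 R \<subseteq> {0..real R}" for R unfolding B1_def by auto
  have B2sub: "B2 R \<subseteq> {0..real R}" for R unfolding B2_def by auto
  have Bfin: "emeasure lebesgue B < \<infinity>" if "B \<subseteq> {0..real R}" "B \<in> sets lebesgue" for B R
  proof -
    have "emeasure lebesgue B \<le> emeasure lebesgue {0..real R}" using that by (intro emeasure_mono) auto
    thus ?thesis using Icc_fin by (rule order_le_less_trans)
  qed
  have ae_notin: "AE x in lebesgue. x \<notin> B"
    if i: "integrable lebesgue (\<lambda>x. \<psi> x * indicator B x)" and pos: "\<And>x. x \<in> B \<Longrightarrow> 0 < \<psi> x"
      and le: "(\<integral>x. \<psi> x * indicator B x \<partial>lebesgue) \<le> 0" for B and \<psi> :: "real \<Rightarrow> real"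
  proof -
    have nn: "AE x in lebesgue. 0 \<le> \<psi> x * indicator B x"
      using pos by (intro AE_I2) (auto simp: indicator_def intro: less_imp_le)
    have "(\<integral>x. \<psi> x * indicator B x \<partial>lebesgue) = 0" using le integral_nonneg_AE[OF nn] by simp
    hence "AE x in lebesgue. \<psi> x * indicator B x = 0" using integral_nonneg_eq_0_iff_AE[OF i nn] by simp
    thus ?thesis by eventually_elim (use pos in \<open>force simp: indicator_def\<close>)
  qed
  have a1: "AE x in lebesgue. x \<notin> B1 R" for R
  proof (rule ae_notin[where \<psi>="\<lambda>x. gg x - C"])
    have e: "(\<lambda>x. (gg x - C) * indicator (B1 R) x) = (\<lambda>x. gg x * indicator (B1 R) x - C * indicator (B1 R) x)"
      by (auto simp: fun_eq_iff algebra_simps)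
    have ic: "integrable lebesgue (\<lambda>x. C * indicator (B1 R) x :: real)"
      using Bfin[OF B1sub B1s] B1s by simp
    show "integrable lebesgue (\<lambda>x. (gg x - C) * indicator (B1 R) x)"
      unfolding e using ggi[OF B1s B1sub] ic by simp
    show "0 < gg x - C" if "x \<in> B1 R" for x using that unfolding B1_def by auto
    have "(\<integral>x. (gg x - C) * indicator (B1 R) x \<partial>lebesgue) =
          (\<integral>x. gg x * indicator (B1 R) x \<partial>lebesgue) - C * measure lebesgue (B1 R)"
      unfolding e using ggi[OF B1s B1sub] ic by simp
    also have "\<dots> \<le> 0" using key[OF B1s[of R] B1sub[of R]] by (simp add: abs_le_iff)
    finally show "(\<integral>x. (gg x - C) * indicator (B1 R) x \<partial>lebesgue) \<le> 0" .
  qed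
  have a2: "AE x in lebesgue. x \<notin> B2 R" for R
  proof (rule ae_notin[where \<psi>="\<lambda>x. - C - gg x"])
    have e: "(\<lambda>x. (- C - gg x) * indicator (B2 R) x) = (\<lambda>x. (- C) * indicator (B2 R) x - gg x * indicator (B2 R) x)"
      by (auto simp: fun_eq_iff algebra_simps)
    have ic: "integrable lebesgue (\<lambda>x. (- C) * indicator (B2 R) x :: real)"
      using Bfin[OF B2sub B2s] B2s by simp
    show "integrable lebesgue (\<lambda>x. (- C - gg x) * indicator (B2 R) x)"
      unfolding e using ggi[OF B2s B2sub] ic by simp
    show "0 < - C - gg x" if "x \<in> B2 R" for x using that unfolding B2_def by auto
    have "(\<integral>x. (- C - gg x) * indicator (B2 R) x \<partial>lebesgue) =
          - C * measure lebesgue (B2 R) - (\<integral>x. gg x * indicator (B2 R) x \<partial>lebesgue)"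
      unfolding e using ggi[OF B2s B2sub] ic by simp
    also have "\<dots> \<le> 0" using key[OF B2s[of R] B2sub[of R]] by (simp add: abs_le_iff)
    finally show "(\<integral>x. (- C - gg x) * indicator (B2 R) x \<partial>lebesgue) \<le> 0" .
  qed
  have "AE x in lebesgue. \<forall>R. x \<notin> B1 R \<and> x \<notin> B2 R"
    unfolding AE_all_countable using a1 a2 by (auto intro: AE_conjI)
  thus ?thesis
  proof eventually_elim
    case (elim x)
    show ?case
    proof
      assume x: "0 \<le> x"
      let ?R = "nat \<lceil>x\<rceil>"
      have "x \<in> {0..real ?R}" using x by (auto intro: real_nat_ceiling_ge)
      with elim have "\<not> C < gg x" "\<not> gg x < - C" unfolding B1_def B2_def by auto
      thus "\<bar>g x\<bar> \<le> C" using x unfolding gg_def by auto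
    qed
  qed
qed


lemma exp_meas: "(\<lambda>x::real. exp (- x)) \<in> borel_measurable lebesgue"
  by (intro measurable_completion) measurable

lemma piece_bound:
  fixes \<phi> :: "real \<Rightarrow> real"
  assumes m: "\<phi> \<in> borel_measurable lebesgue"
    and b: "AE u in lebesgue. 0 \<le> u \<longrightarrow> \<bar>\<phi> u\<bar> \<le> C * exp (- u)"
    and S: "S \<in> sets lebesgue" "S \<subseteq> {a..}" and a: "0 \<le> a" and C: "0 \<le> C"
  shows "integrable lebesgue (\<lambda>u. indicator S u * \<phi> u)"
    "\<bar>\<integral>u. indicator S u * \<phi> u \<partial>lebesgue\<bar> \<le> C * exp (- a)"
proof -
  have ie: "integrable lebesgue (\<lambda>u. indicator {a..} u * exp (- u))"
    using exp_minus_set_integrable(1)[of a] unfolding set_integrable_def by simp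
  have ib: "integrable lebesgue (\<lambda>u. C * (indicator {a..} u * exp (- u)))"
    using ie by simp
  have mm: "(\<lambda>u. indicator S u * \<phi> u) \<in> borel_measurable lebesgue"
    using m S by (intro borel_measurable_times borel_measurable_indicator) auto
  have bb: "AE u in lebesgue. \<bar>indicator S u * \<phi> u\<bar> \<le> C * (indicator {a..} u * exp (- u))"
    using b by eventually_elim (use S a in \<open>auto simp: indicator_def\<close>)
  show i: "integrable lebesgue (\<lambda>u. indicator S u * \<phi> u)"
    by (rule Bochner_Integration.integrable_bound[OF ib mm]) (use bb C in \<open>auto elim: eventually_mono\<close>)
  have "\<bar>\<integral>u. indicator S u * \<phi> u \<partial>lebesgue\<bar> \<le> (\<integral>u. \<bar>indicator S u * \<phi> u\<bar> \<partial>lebesgue)"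
    by (rule integral_abs_bound)
  also have "\<dots> \<le> (\<integral>u. C * (indicator {a..} u * exp (- u)) \<partial>lebesgue)"
    using i ib bb by (intro integral_mono_AE) auto
  also have "\<dots> = C * (LINT u:{a..}|lebesgue. exp (- u))"
    unfolding set_lebesgue_integral_def by simp
  also have "\<dots> = C * exp (- a)" using exp_minus_set_integrable(2) by simp
  finally show "\<bar>\<integral>u. indicator S u * \<phi> u \<partial>lebesgue\<bar> \<le> C * exp (- a)" .
qed

lemma AE_singleton_lebesgue: "AE x in lebesgue. x \<notin> {a::real}"
  by (rule AE_not_in) (simp add: negligible_iff_null_sets[symmetric])

lemma part_fin:
  fixes x u :: real and M :: nat
  assumes "real M \<le> x"
  shows "(indicator {0..x} u :: real) = indicator {0} u + (\<Sum>N\<in>{1..M}. indicator {real N - 1<..real N} u) + indicator {real M<..x} u"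
  using assms
proof (induction M arbitrary: x)
  case 0 thus ?case by (auto simp: indicator_def)
next
  case (Suc M)
  have "indicator {real M<..x} u = indicator {real M<..real (Suc M)} u + (indicator {real (Suc M)<..x} u :: real)"
    using Suc.prems by (auto simp: indicator_def)
  thus ?case using Suc by (simp add: algebra_simps)
qed

lemma part_inf:
  fixes u :: real and M :: nat
  shows "(indicator {0..} u :: real) = indicator {0} u + (\<Sum>N\<in>{1..M}. indicator {real N - 1<..real N} u) + indicator {real M<..} u"
proof (induction M)
  case 0 thus ?case by (auto simp: indicator_def)
next
  case (Suc M)
  have "indicator {real M<..} u = indicator {real M<..real (Suc M)} u + (indicator {real (Suc M)<..} u :: real)"
    by (auto simp: indicator_def)
  thus ?case using Suc by (simp add: algebra_simps)
qed


locale MAIN =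
  fixes f :: "real \<Rightarrow> real" and \<omega> :: "nat filter \<times> real"
  assumes fL: "f \<in> Linf_Rplus" and om: "\<omega> \<in> Omega_star"
begin

lemma om_props: "is_ultrafilter (fst \<omega>)" "fst \<omega> \<le> sequentially" "0 \<le> snd \<omega>" "snd \<omega> < 1"
  using om unfolding Omega_star_def by auto

lemma C_ex: "\<exists>C. 0 \<le> C \<and> (AE x in lebesgue. x \<in> {0..} \<longrightarrow> \<bar>f x\<bar> \<le> C)"
proof -
  from fL obtain C0 where "AE x in lebesgue. x \<in> {0..} \<longrightarrow> \<bar>f x\<bar> \<le> C0"
    unfolding Linf_Rplus_def by auto
  hence "AE x in lebesgue. x \<in> {0..} \<longrightarrow> \<bar>f x\<bar> \<le> \<bar>C0\<bar>" by eventually_elim auto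
  thus ?thesis by (intro exI[of _ "\<bar>C0\<bar>"]) auto
qed

definition C :: real where "C = (SOME C. 0 \<le> C \<and> (AE x in lebesgue. x \<in> {0..} \<longrightarrow> \<bar>f x\<bar> \<le> C))"

lemma C: "0 \<le> C" and fbd: "AE x in lebesgue. x \<in> {0..} \<longrightarrow> \<bar>f x\<bar> \<le> C"
  using someI_ex[OF C_ex] unfolding C_def by auto

lemma fmeas: "(\<lambda>x. indicator {0..} x * f x) \<in> borel_measurable lebesgue"
  using fL unfolding Linf_Rplus_def set_borel_measurable_def by simp

abbreviation "tb n \<equiv> tau_back n \<omega>"

definition g :: "nat \<Rightarrow> real \<Rightarrow> real" where "g n = f_omega f (tb n)"

lemma tb_props: "is_ultrafilter (fst (tb n))" "0 \<le> snd (tb n)"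
  using ultra_filtermap[OF om_props(1)] om_props(3) unfolding tau_back_def by auto

lemma g_wsl: "weak_star_lim f (tb n) (g n)"
  unfolding g_def by (rule f_omega_wsl[OF fL tb_props])

lemma g_bd: "AE x in lebesgue. 0 \<le> x \<longrightarrow> \<bar>g n x\<bar> \<le> C"
  by (rule wsl_bound[OF fmeas fbd C g_wsl tb_props])

lemma g_meas: "(\<lambda>x. indicator {0..} x * g n x) \<in> borel_measurable lebesgue"
  using g_wsl[of n] unfolding weak_star_lim_def Linf_Rplus_def set_borel_measurable_def by simp

lemma tb0: "tb 0 = \<omega>"
  unfolding tau_back_def by (simp add: filtermap_ident)

definition F :: "real \<Rightarrow> real" where "F u = f_omega_ext f \<omega> (- u) * exp (- u)"

lemma F_eq: assumes "0 \<le> u"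
  shows "F u = g (nat \<lceil>u\<rceil>) (real (nat \<lceil>u\<rceil>) - u) * exp (- u)"
proof (cases "u = 0")
  case True thus ?thesis by (simp add: F_def f_omega_ext_def g_def tb0)
next
  case False
  hence "\<not> 0 \<le> - u" using assms by simp
  thus ?thesis by (simp add: F_def f_omega_ext_def g_def Let_def)
qed

definition phiR :: "real \<Rightarrow> real" where "phiR u = indicator {0..} u * F u"

definition KK :: "nat \<Rightarrow> real \<Rightarrow> real" where
  "KK n u = indicator {0..} u * (indicator {0..} (real n - u) * g n (real n - u)) * exp (- u)"

lemma phiR_KK: "phiR u = KK (nat \<lceil>u\<rceil>) u"
proof (cases "0 \<le> u")
  case True
  have "u \<le> real (nat \<lceil>u\<rceil>)" by (simp add: real_nat_ceiling_ge)
  thus ?thesis using True by (simp add: phiR_def KK_def F_eq)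
next
  case False thus ?thesis by (simp add: phiR_def KK_def)
qed

lemma KK_meas: "KK n \<in> borel_measurable lebesgue"
proof -
  have "(\<lambda>u. indicator {0..} (real n + (-1) * u) * g n (real n + (-1) * u)) \<in> borel_measurable lebesgue"
    by (rule measurable_lebesgue_affine[OF g_meas]) simp
  hence "(\<lambda>u. indicator {0..} (real n - u) * g n (real n - u)) \<in> borel_measurable lebesgue" by simp
  from borel_measurable_times[OF borel_measurable_times[OF ind0_meas this] exp_meas]
  show ?thesis unfolding KK_def[abs_def] .
qed

lemma phiR_meas: "phiR \<in> borel_measurable lebesgue"
proof -
  have "(\<lambda>u. KK (nat \<lceil>u\<rceil>) u) \<in> borel_measurable lebesgue"
  proof (rule measurable_compose_countable[OF KK_meas])
    show "(\<lambda>x::real. nat \<lceil>x\<rceil>) \<in> lebesgue \<rightarrow>\<^sub>M count_space UNIV"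
      by (intro measurable_completion) measurable
  qed
  thus ?thesis by (simp add: phiR_KK[abs_def])
qed

lemma phiR_bd: "AE u in lebesgue. 0 \<le> u \<longrightarrow> \<bar>phiR u\<bar> \<le> C * exp (- u)"
proof -
  have "AE u in lebesgue. 0 \<le> real n + (-1) * u \<longrightarrow> \<bar>g n (real n + (-1) * u)\<bar> \<le> C" for n
    by (rule AE_lebesgue_affine[OF g_bd]) simp
  hence "\<forall>n. AE u in lebesgue. 0 \<le> real n - u \<longrightarrow> \<bar>g n (real n - u)\<bar> \<le> C" by simp
  hence "AE u in lebesgue. \<forall>n. 0 \<le> real n - u \<longrightarrow> \<bar>g n (real n - u)\<bar> \<le> C"
    by (simp add: AE_all_countable)
  thus ?thesis
  proof eventually_elim
    case (elim u)
    show ?case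
    proof
      assume u: "0 \<le> u"
      have le: "u \<le> real (nat \<lceil>u\<rceil>)" by (simp add: real_nat_ceiling_ge)
      hence "\<bar>g (nat \<lceil>u\<rceil>) (real (nat \<lceil>u\<rceil>) - u)\<bar> \<le> C" using elim by simp
      thus "\<bar>phiR u\<bar> \<le> C * exp (- u)"
        using u by (simp add: phiR_def F_eq abs_mult mult_right_mono)
    qed
  qed
qed

definition Phi :: "real \<Rightarrow> real \<Rightarrow> real" where
  "Phi x u = indicator {0..} (x - u) * f (x - u) * exp (- u)"

lemma Phi_meas: "Phi x \<in> borel_measurable lebesgue"
proof -
  have "(\<lambda>u. indicator {0..} (x + (-1) * u) * f (x + (-1) * u)) \<in> borel_measurable lebesgue"
    by (rule measurable_lebesgue_affine[OF fmeas]) simp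
  hence "(\<lambda>u. indicator {0..} (x - u) * f (x - u)) \<in> borel_measurable lebesgue" by simp
  from borel_measurable_times[OF this exp_meas] show ?thesis unfolding Phi_def[abs_def] .
qed

lemma Phi_bd: "AE u in lebesgue. 0 \<le> u \<longrightarrow> \<bar>Phi x u\<bar> \<le> C * exp (- u)"
proof -
  have "AE u in lebesgue. x + (-1) * u \<in> {0..} \<longrightarrow> \<bar>f (x + (-1) * u)\<bar> \<le> C"
    by (rule AE_lebesgue_affine[OF fbd]) simp
  thus ?thesis
    by eventually_elim (use C in \<open>auto simp: Phi_def abs_mult indicator_def intro: mult_right_mono\<close>)
qed

end


lemma split_gen:
  fixes \<phi> :: "real \<Rightarrow> real" and M :: nat
  assumes m: "\<phi> \<in> borel_measurable lebesgue"
    and b: "AE u in lebesgue. 0 \<le> u \<longrightarrow> \<bar>\<phi> u\<bar> \<le> C * exp (- u)" and C: "0 \<le> C"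
    and T: "T \<in> sets lebesgue" "T \<subseteq> {0..}"
    and P: "\<And>u. (indicator S u :: real) = indicator {0} u + (\<Sum>N\<in>{1..M}. indicator {real N - 1<..real N} u) + indicator T u"
  shows "(\<integral>u. indicator S u * \<phi> u \<partial>lebesgue) =
     (\<Sum>N\<in>{1..M}. \<integral>u. indicator {real N - 1<..real N} u * \<phi> u \<partial>lebesgue) + (\<integral>u. indicator T u * \<phi> u \<partial>lebesgue)"
proof -
  have iN: "integrable lebesgue (\<lambda>u. indicator {real N - 1<..real N} u * \<phi> u)" if "N \<in> {1..M}" for N
    using that by (intro piece_bound(1)[OF m b _ _ order_refl C]) auto
  have i0: "integrable lebesgue (\<lambda>u. indicator {0} u * \<phi> u)"
    by (intro piece_bound(1)[OF m b _ _ order_refl C]) auto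
  have iT: "integrable lebesgue (\<lambda>u. indicator T u * \<phi> u)"
    by (intro piece_bound(1)[OF m b T order_refl C])
  have iS: "integrable lebesgue (\<lambda>u. \<Sum>N\<in>{1..M}. indicator {real N - 1<..real N} u * \<phi> u)"
    using iN by (intro Bochner_Integration.integrable_sum) auto
  have z: "(\<integral>u. indicator {0} u * \<phi> u \<partial>lebesgue) = 0"
  proof -
    have "AE u in lebesgue. indicator {0} u * \<phi> u = 0"
      using AE_singleton_lebesgue[of 0] by eventually_elim simp
    thus ?thesis by (rule integral_eq_zero_AE)
  qed
  have "(\<lambda>u. indicator S u * \<phi> u) = (\<lambda>u. indicator {0} u * \<phi> u +
          (\<Sum>N\<in>{1..M}. indicator {real N - 1<..real N} u * \<phi> u) + indicator T u * \<phi> u)"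
  proof (rule ext)
    fix u
    have "indicator S u * \<phi> u = (indicator {0} u + (\<Sum>N\<in>{1..M}. indicator {real N - 1<..real N} u) + indicator T u) * \<phi> u"
      by (simp only: P)
    also have "\<dots> = indicator {0} u * \<phi> u + (\<Sum>N\<in>{1..M}. indicator {real N - 1<..real N} u * \<phi> u) + indicator T u * \<phi> u"
      by (simp only: distrib_right sum_distrib_right)
    finally show "indicator S u * \<phi> u = indicator {0} u * \<phi> u + (\<Sum>N\<in>{1..M}. indicator {real N - 1<..real N} u * \<phi> u) + indicator T u * \<phi> u" .
  qed
  hence "(\<integral>u. indicator S u * \<phi> u \<partial>lebesgue) =
     (\<integral>u. indicator {0} u * \<phi> u \<partial>lebesgue) +
     (\<integral>u. (\<Sum>N\<in>{1..M}. indicator {real N - 1<..real N} u * \<phi> u) \<partial>lebesgue) +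
     (\<integral>u. indicator T u * \<phi> u \<partial>lebesgue)"
    using i0 iS iT by simp
  also have "(\<integral>u. (\<Sum>N\<in>{1..M}. indicator {real N - 1<..real N} u * \<phi> u) \<partial>lebesgue) =
     (\<Sum>N\<in>{1..M}. \<integral>u. indicator {real N - 1<..real N} u * \<phi> u \<partial>lebesgue)"
    using iN by (intro Bochner_Integration.integral_sum) auto
  finally show ?thesis using z by simp
qed

context MAIN begin

lemma G_eq: assumes x: "0 \<le> x"
  shows "exp (- x) * (LINT t:{0..x}|lebesgue. f t * exp t) = (\<integral>u. indicator {0..x} u * Phi x u \<partial>lebesgue)"
proof -
  let ?\<phi> = "\<lambda>t. indicator {0..x} t *\<^sub>R (f t * exp t)"
  have "(LINT t:{0..x}|lebesgue. f t * exp t) = (\<integral>t. ?\<phi> t \<partial>lebesgue)"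
    unfolding set_lebesgue_integral_def ..
  also have "\<dots> = \<bar>-1\<bar> *\<^sub>R (\<integral>u. ?\<phi> (x + (-1) * u) \<partial>lebesgue)"
    by (rule lebesgue_integral_real_affine) simp
  also have "\<dots> = (\<integral>u. ?\<phi> (x - u) \<partial>lebesgue)" by simp
  finally have e1: "(LINT t:{0..x}|lebesgue. f t * exp t) = (\<integral>u. ?\<phi> (x - u) \<partial>lebesgue)" .
  have "exp (- x) * (\<integral>u. ?\<phi> (x - u) \<partial>lebesgue) = (\<integral>u. exp (- x) * ?\<phi> (x - u) \<partial>lebesgue)"
    by simp
  also have "\<dots> = (\<integral>u. indicator {0..x} u * Phi x u \<partial>lebesgue)"
  proof (intro Bochner_Integration.integral_cong refl)
    fix u
    have "exp (- x) * exp (x - u) = exp (- u)" by (simp add: mult_exp_exp)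
    thus "exp (- x) * ?\<phi> (x - u) = indicator {0..x} u * Phi x u"
      by (auto simp: Phi_def indicator_def mult_ac)
  qed
  finally show ?thesis using e1 by simp
qed

lemma ev_ge: "eventually (\<lambda>k. N \<le> k) (fst \<omega>)"
  using filter_leD[OF om_props(2) eventually_ge_at_top[of N]] .

lemma piece_lim: assumes N: "1 \<le> N"
  shows "((\<lambda>x. \<integral>u. indicator {real N - 1<..real N} u * Phi x u \<partial>lebesgue) \<longlongrightarrow>
          (\<integral>u. indicator {real N - 1<..real N} u * phiR u \<partial>lebesgue)) (omega_filter \<omega>)"
proof -
  define t0 where "t0 = snd \<omega>"
  have t0: "0 \<le> t0" using om_props(3) unfolding t0_def .
  define h where "h y = indicator {0..<1} y * exp (y - real N)" for y :: real
  have hL: "h \<in> L1_Rplus"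
  proof -
    have m: "(\<lambda>y::real. indicator {0..} y *\<^sub>R (indicator {0..<1} y * exp (y - real N))) \<in> borel_measurable lebesgue"
      by (intro measurable_completion) measurable
    have "AE y in lebesgue. \<bar>indicator {0..} y *\<^sub>R (indicator {0..<1} y * exp (y - real N))\<bar> \<le> 1 * indicator {0..1} y"
    proof (rule AE_I2)
      fix y :: real
      show "\<bar>indicator {0..} y *\<^sub>R (indicator {0..<1} y * exp (y - real N))\<bar> \<le> 1 * indicator {0..1} y"
      proof (cases "0 \<le> y \<and> y < 1")
        case True
        hence "exp (y - real N) \<le> 1" using N by simp
        thus ?thesis using True by (simp add: indicator_def)
      qed (auto simp: indicator_def)
    qed
    from int_bound_helper(1)[OF m this _ Icc_fin] show ?thesis
      unfolding L1_Rplus_def set_integrable_def h_def by simp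
  qed
  define \<psi> where "\<psi> s = (LINT y:{0..}|lebesgue. f (y + s) * h y)" for s
  define L where "L = (LINT y:{0..}|lebesgue. g N y * h y)"
  have lim: "(\<psi> \<longlongrightarrow> L) (omega_filter (tb N))"
    using g_wsl[of N] hL unfolding weak_star_lim_def \<psi>_def[abs_def] L_def by auto
  have Fo: "omega_filter (tb N) = filtermap (\<lambda>k. real (k - N) + t0) (fst \<omega>)"
    unfolding omega_filter_def tau_back_def t0_def by (simp add: filtermap_filtermap)
  have lim2: "((\<lambda>k. \<psi> (real (k - N) + t0)) \<longlongrightarrow> L) (fst \<omega>)"
    using lim unfolding Fo filterlim_filtermap .
  have A: "(\<integral>u. indicator {real N - 1<..real N} u * Phi (real k + t0) u \<partial>lebesgue) = \<psi> (real (k - N) + t0)"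
    if k: "N \<le> k" for k
  proof -
    define x where "x = real k + t0"
    define s where "s = real (k - N) + t0"
    have sx: "s = x - real N" unfolding s_def x_def using k by (simp add: of_nat_diff)
    have s0: "0 \<le> s" unfolding s_def using t0 by simp
    have "(\<integral>u. indicator {real N - 1<..real N} u * Phi x u \<partial>lebesgue) =
        \<bar>-1\<bar> *\<^sub>R (\<integral>y. indicator {real N - 1<..real N} (real N + (-1) * y) * Phi x (real N + (-1) * y) \<partial>lebesgue)"
      by (rule lebesgue_integral_real_affine) simp
    also have "\<dots> = \<psi> s"
      unfolding \<psi>_def set_lebesgue_integral_def
    proof (simp, intro Bochner_Integration.integral_cong refl)
      fix y :: real
      show "indicator {real N - 1<..real N} (real N - y) * Phi x (real N - y) =
            indicator {0..} y * (f (y + s) * h y)"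
      proof (cases "0 \<le> y \<and> y < 1")
        case True
        have e1: "x - (real N - y) = y + s" using sx by simp
        have e2: "exp (- (real N - y)) = exp (y - real N)" by simp
        have "indicator {real N - 1<..real N} (real N - y) = (1::real)" using True by (simp add: indicator_def)
        moreover have "indicator {0..} (y + s) = (1::real)" using True s0 by (simp add: indicator_def)
        ultimately show ?thesis using True unfolding Phi_def h_def e1 e2 by (simp add: indicator_def)
      next
        case False
        hence "indicator {real N - 1<..real N} (real N - y) = (0::real)" by (auto simp: indicator_def)
        moreover have "h y = 0" using False unfolding h_def by (auto simp: indicator_def)
        ultimately show ?thesis by simp
      qed
    qed
    finally show ?thesis unfolding x_def s_def .
  qed
  have B: "(\<integral>u. indicator {real N - 1<..real N} u * phiR u \<partial>lebesgue) = L"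
  proof -
    have "(\<integral>u. indicator {real N - 1<..real N} u * phiR u \<partial>lebesgue) =
        \<bar>-1\<bar> *\<^sub>R (\<integral>y. indicator {real N - 1<..real N} (real N + (-1) * y) * phiR (real N + (-1) * y) \<partial>lebesgue)"
      by (rule lebesgue_integral_real_affine) simp
    also have "\<dots> = L"
      unfolding L_def set_lebesgue_integral_def
    proof (simp, intro Bochner_Integration.integral_cong refl)
      fix y :: real
      show "indicator {real N - 1<..real N} (real N - y) * phiR (real N - y) =
            indicator {0..} y * (g N y * h y)"
      proof (cases "0 \<le> y \<and> y < 1")
        case True
        have c: "\<lceil>real N - y\<rceil> = int N" by (rule ceiling_unique) (use True in auto)
        have u0: "0 \<le> real N - y" using True N by simp
        have "phiR (real N - y) = g N y * exp (y - real N)"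
          unfolding phiR_def using u0 by (simp add: F_eq c)
        thus ?thesis using True unfolding h_def by (simp add: indicator_def)
      next
        case False
        hence "indicator {real N - 1<..real N} (real N - y) = (0::real)" by (auto simp: indicator_def)
        moreover have "h y = 0" using False unfolding h_def by (auto simp: indicator_def)
        ultimately show ?thesis by simp
      qed
    qed
    finally show ?thesis .
  qed
  have ev: "eventually (\<lambda>k. \<psi> (real (k - N) + t0) =
       (\<integral>u. indicator {real N - 1<..real N} u * Phi (real k + t0) u \<partial>lebesgue)) (fst \<omega>)"
    using ev_ge[of N] by eventually_elim (simp add: A)
  have "((\<lambda>k. \<integral>u. indicator {real N - 1<..real N} u * Phi (real k + t0) u \<partial>lebesgue) \<longlongrightarrow> L) (fst \<omega>)"
    by (rule Lim_transform_eventually[OF lim2 ev])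
  thus ?thesis unfolding B omega_filter_def t0_def filterlim_filtermap .
qed

lemma R_eq: "(LINT t:{0..}|lebesgue. f_omega_ext f \<omega> (- t) * exp (- t)) = (\<integral>u. indicator {0..} u * phiR u \<partial>lebesgue)"
  unfolding set_lebesgue_integral_def phiR_def F_def
  by (intro Bochner_Integration.integral_cong refl) (simp add: indicator_def)

lemma main_tendsto:
  "((\<lambda>x. exp (- x) * (LINT t:{0..x}|lebesgue. f t * exp t)) \<longlongrightarrow>
     (LINT t:{0..}|lebesgue. f_omega_ext f \<omega> (- t) * exp (- t))) (omega_filter \<omega>)"
proof (rule tendstoI)
  fix \<epsilon> :: real assume e: "0 < \<epsilon>"
  obtain M :: nat where M: "4 * C / \<epsilon> < real M" using reals_Archimedean2 by blast
  have CM: "C * exp (- real M) \<le> \<epsilon> / 4"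
  proof -
    have "real M \<le> exp (real M)" using exp_ge_add_one_self[of "real M"] by linarith
    hence "4 * C / \<epsilon> < exp (real M)" using M by simp
    hence "C < \<epsilon> / 4 * exp (real M)" using e by (simp add: field_simps)
    hence "C * exp (- real M) \<le> \<epsilon> / 4 * exp (real M) * exp (- real M)"
      by (intro mult_right_mono) auto
    also have "\<dots> = \<epsilon> / 4" by (simp add: exp_minus field_simps)
    finally show ?thesis .
  qed
  define Ps where "Ps x = (\<Sum>N\<in>{1..M}. \<integral>u. indicator {real N - 1<..real N} u * Phi x u \<partial>lebesgue)" for x
  define Qs where "Qs = (\<Sum>N\<in>{1..M}. \<integral>u. indicator {real N - 1<..real N} u * phiR u \<partial>lebesgue)"
  have "(Ps \<longlongrightarrow> Qs) (omega_filter \<omega>)"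
    unfolding Ps_def[abs_def] Qs_def by (intro tendsto_sum piece_lim) auto
  hence ev1: "eventually (\<lambda>x. dist (Ps x) Qs < \<epsilon> / 2) (omega_filter \<omega>)"
    using e by (intro tendstoD) auto
  have ev2: "eventually (\<lambda>x. real M \<le> x \<and> 0 \<le> x) (omega_filter \<omega>)"
    unfolding omega_filter_def eventually_filtermap
    using ev_ge[of M] by eventually_elim (use om_props(3) in auto)
  define Tl where "Tl = (\<integral>u. indicator {real M<..} u * phiR u \<partial>lebesgue)"
  have R: "(LINT t:{0..}|lebesgue. f_omega_ext f \<omega> (- t) * exp (- t)) = Qs + Tl"
    unfolding R_eq Qs_def Tl_def
    by (rule split_gen[OF phiR_meas phiR_bd C _ _ part_inf]) auto
  have Tlb: "\<bar>Tl\<bar> \<le> C * exp (- real M)"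
    unfolding Tl_def by (rule piece_bound(2)[OF phiR_meas phiR_bd]) (use C in auto)
  show "eventually (\<lambda>x. dist (exp (- x) * (LINT t:{0..x}|lebesgue. f t * exp t))
      (LINT t:{0..}|lebesgue. f_omega_ext f \<omega> (- t) * exp (- t)) < \<epsilon>) (omega_filter \<omega>)"
    using ev1 ev2
  proof eventually_elim
    case (elim x)
    define T where "T = (\<integral>u. indicator {real M<..x} u * Phi x u \<partial>lebesgue)"
    have "exp (- x) * (LINT t:{0..x}|lebesgue. f t * exp t) = (\<integral>u. indicator {0..x} u * Phi x u \<partial>lebesgue)"
      using elim by (intro G_eq) auto
    also have "\<dots> = Ps x + T"
      unfolding Ps_def T_def by (rule split_gen[OF Phi_meas Phi_bd C _ _ part_fin]) (use elim in auto)
    finally have G: "exp (- x) * (LINT t:{0..x}|lebesgue. f t * exp t) = Ps x + T" .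
    have Tb: "\<bar>T\<bar> \<le> C * exp (- real M)"
      unfolding T_def by (rule piece_bound(2)[OF Phi_meas Phi_bd]) (use C in auto)
    have "dist (Ps x + T) (Qs + Tl) \<le> dist (Ps x) Qs + \<bar>T\<bar> + \<bar>Tl\<bar>"
      by (simp add: dist_real_def)
    also have "\<dots> < \<epsilon>" using elim(1) Tb Tlb CM by simp
    finally show ?case unfolding G R .
  qed
qed

lemma main: "chi \<omega> f = (LINT t:{0..}|lebesgue. f_omega_ext f \<omega> (- t) * exp (- t))"
proof -
  have "omega_filter \<omega> \<noteq> bot"
    using omega_filter_ultra[OF om_props(1)] by (simp add: is_ultrafilter_def)
  thus ?thesis unfolding chi_def by (intro tendsto_Lim main_tendsto)
qed

end

theorem theorem3p3:
  assumes "f \<in> Linf_Rplus" and "\<omega> \<in> Omega_star"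
  shows "chi \<omega> f = (LINT t:{0..}|lebesgue. f_omega_ext f \<omega> (- t) * exp (- t))"
proof -
  interpret MAIN f \<omega> using assms by unfold_locales
  show ?thesis by (rule main)
qed

end
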